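(* Let $S$ be a monoid such that the words $yxxty$ and $ytxxy$ (with $x,y,t$ distinct variables) are isoterms for $S$. Then for every $n\ge1$ the word $z_1t_1z_2t_2\cdots z_nt_n\,xx\,z_1z_2\cdots z_n$ (with $x,z_1,\dots,z_n,t_1,\dots,t_n$ distinct variables) is an isoterm for $S$.
   Context: Words are elements of the free semigroup over a countably infinite alphabet of variables. A monoid $S$ satisfies an identity $\mathbf u\approx\mathbf v$ if both sides are equal under every evaluation of the variables in $S$. A word $\mathbf w$ is an isoterm for $S$ if $S$ satisfies no identity $\mathbf w\approx\mathbf w'$ with $\mathbf w'\ne\mathbf w$. *)

theory Defs
  imports Main
begin

text \<open>Variables are natural numbers (a countably infinite alphabet); words are
nonempty lists of variables (elements of the free semigroup).\<close>

type_synonym word = "nat list"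

definition is_word :: "word \<Rightarrow> bool" where
  "is_word w \<longleftrightarrow> w \<noteq> []"

definition eval_word :: "(nat \<Rightarrow> 'a::monoid_mult) \<Rightarrow> word \<Rightarrow> 'a" where
  "eval_word \<phi> w = prod_list (map \<phi> w)"

definition satisfies :: "'a::monoid_mult itself \<Rightarrow> word \<Rightarrow> word \<Rightarrow> bool" where
  "satisfies S u v \<longleftrightarrow> (\<forall>\<phi> :: nat \<Rightarrow> 'a. eval_word \<phi> u = eval_word \<phi> v)"

definition isoterm :: "'a::monoid_mult itself \<Rightarrow> word \<Rightarrow> bool" where
  "isoterm S w \<longleftrightarrow> (\<forall>w'. is_word w' \<and> satisfies S w w' \<longrightarrow> w' = w)"

end

theory Submission
  imports Defs
begin


lemma eval_append: "eval_word \<phi> (u @ v) = eval_word \<phi> u * eval_word \<phi> v"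
  by (simp add: eval_word_def)

lemma eval_filter: "eval_word \<phi> (filter P u) = eval_word (\<lambda>d. if P d then \<phi> d else 1) u"
  by (induction u) (auto simp: eval_word_def)

lemma sat_filter: "satisfies S u v \<Longrightarrow> satisfies S (filter P u) (filter P v)"
  unfolding satisfies_def by (simp add: eval_filter)

lemma sat_sym: "satisfies S u v \<Longrightarrow> satisfies S v u"
  unfolding satisfies_def by simp

lemma sat_map: "satisfies S u v \<Longrightarrow> satisfies S (map \<rho> u) (map \<rho> v)"
  unfolding satisfies_def eval_word_def by (simp add: comp_def)

lemma iso_not_empty:
  fixes S :: "'a::monoid_mult itself"
  assumes "isoterm S u" "u \<noteq> []" shows "\<not> satisfies S u []"
proof
  assume s: "satisfies S u []"
  have "satisfies S u (u @ u)"
    using s unfolding satisfies_def by (simp add: eval_append eval_word_def)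
  then have "u @ u = u" using assms unfolding isoterm_def is_word_def by auto
  then show False using assms(2) by simp
qed

lemma inj_rho:
  assumes "distinct [x,y,t::nat]" "distinct [a,b,c::nat]" "M > x" "M > y" "M > t"
  shows "inj (\<lambda>d::nat. if d = a then y else if d = b then t else if d = c then x else d + M)"
proof (rule injI)
  fix d1 d2 assume h: "(if d1 = a then y else if d1 = b then t else if d1 = c then x else d1 + M) =
     (if d2 = a then y else if d2 = b then t else if d2 = c then x else d2 + M)"
  have v: "\<And>d. (if d = a then y else if d = b then t else if d = c then x else d + M) = y \<longleftrightarrow> d = a"
          "\<And>d. (if d = a then y else if d = b then t else if d = c then x else d + M) = t \<longleftrightarrow> d = b"
          "\<And>d. (if d = a then y else if d = b then t else if d = c then x else d + M) = x \<longleftrightarrow> d = c"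
    using assms by auto
  show "d1 = d2"
  proof (cases "d1 = a \<or> d1 = b \<or> d1 = c")
    case True then show ?thesis using h v by (metis)
  next
    case False
    then have e: "(if d1 = a then y else if d1 = b then t else if d1 = c then x else d1 + M) = d1 + M" by auto
    show ?thesis
    proof (cases "d2 = a \<or> d2 = b \<or> d2 = c")
      case True then show ?thesis using h v by (metis)
    next
      case False then show ?thesis using h e by auto
    qed
  qed
qed

lemma KB:
  fixes S :: "'a::monoid_mult itself"
  assumes iso: "isoterm S [y,t,x,x,y]" and dxyt: "distinct [x,y,t]"
    and dabc: "distinct [a,b,c]" and s: "satisfies S [a,b,c,c,a] v"
  shows "v = [a,b,c,c,a]"
proof -
  obtain \<rho> :: "nat \<Rightarrow> nat" where inj: "inj \<rho>" and ra: "\<rho> a = y" and rb: "\<rho> b = t" and rc: "\<rho> c = x"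
  proof -
    define \<rho> where "\<rho> = (\<lambda>d::nat. if d = a then y else if d = b then t else if d = c then x else d + Suc (x+y+t))"
    have "inj \<rho>" unfolding \<rho>_def by (rule inj_rho[OF dxyt dabc]) auto
    moreover have "\<rho> a = y" "\<rho> b = t" "\<rho> c = x" using dabc unfolding \<rho>_def by auto
    ultimately show ?thesis using that by blast
  qed
  have m: "map \<rho> [a,b,c,c,a] = [y,t,x,x,y]" by (simp add: ra rb rc)
  have s2: "satisfies S [y,t,x,x,y] (map \<rho> v)"
    using sat_map[OF s, of \<rho>] m by simp
  have "v \<noteq> []"
  proof
    assume "v = []"
    then have "satisfies S [y,t,x,x,y] []" using s2 by simp
    then show False using iso_not_empty[OF iso] by simp
  qed
  then have "is_word (map \<rho> v)" by (simp add: is_word_def)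
  then have "map \<rho> v = [y,t,x,x,y]" using s2 iso unfolding isoterm_def by blast
  then have "map \<rho> v = map \<rho> [a,b,c,c,a]" using m by simp
  then show ?thesis using inj by (simp only: inj_map_eq_map)
qed

lemma concat_map_single:
  "distinct xs \<Longrightarrow> i \<in> set xs \<Longrightarrow> (\<forall>k\<in>set xs. k \<noteq> i \<longrightarrow> g k = []) \<Longrightarrow> concat (map g xs) = g i"
proof (induction xs)
  case (Cons a xs)
  show ?case
  proof (cases "a = i")
    case True
    have "concat (map g xs) = []" using Cons.prems True by auto
    then show ?thesis using True by simp
  next
    case False then show ?thesis using Cons by auto
  qed
qed simp

lemma concat_map_two:
  "sorted xs \<Longrightarrow> distinct xs \<Longrightarrow> i < j \<Longrightarrow> i \<in> set xs \<Longrightarrow> j \<in> set xs \<Longrightarrow>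
   (\<forall>k\<in>set xs. k \<noteq> i \<longrightarrow> k \<noteq> j \<longrightarrow> g k = []) \<Longrightarrow> concat (map g xs) = g i @ g j"
proof (induction xs)
  case (Cons a xs)
  show ?case
  proof (cases "a = i")
    case True
    have "concat (map g xs) = g j"
      by (rule concat_map_single) (use Cons.prems True in auto)
    then show ?thesis using True by simp
  next
    case False
    have "a \<noteq> j" using Cons.prems False by auto
    then show ?thesis using Cons False by auto
  qed
qed simp

lemma decomp_lem:
  assumes "A @ x # B @ x # C = [a,b,x,x,a]" "x \<notin> set A" "x \<notin> set B" "x \<notin> set C" "a \<noteq> x" "b \<noteq> x"
  shows "A = [a,b] \<and> B = [] \<and> C = [a]"
proof -
  obtain a1 a2 A' where A: "A = a1 # a2 # A'"
    using assms by (cases A; cases "tl A") auto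
  then have "A' @ x # B @ x # C = [x,x,a]" using assms by simp
  then have "A' = []" using assms(2) A by (cases A') auto
  then have "B @ x # C = [x,a]" using assms A by simp
  then have "B = []" using assms(3) by (cases B) auto
  then show ?thesis using assms A \<open>A' = []\<close> by simp
qed

lemma distinct_from_filter:
  "(\<forall>a\<in>set L. filter (\<lambda>c. c = a) L = [a]) \<Longrightarrow> distinct L"
proof (induction L)
  case (Cons c L)
  have "filter (\<lambda>d. d = c) (c # L) = [c]" using Cons.prems by auto
  then have "c \<notin> set L" by (auto simp: filter_empty_conv)
  moreover have "\<forall>a\<in>set L. filter (\<lambda>d. d = a) L = [a]"
  proof
    fix a assume "a \<in> set L"
    then have "a \<noteq> c" using \<open>c \<notin> set L\<close> by auto
    then show "filter (\<lambda>d. d = a) L = [a]" using Cons.prems \<open>a \<in> set L\<close> by auto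
  qed
  ultimately show ?case using Cons.IH by simp
qed simp

lemma filter_sub: "K a \<Longrightarrow> filter (\<lambda>c. c = a) (filter K xs) = filter (\<lambda>c. c = a) xs"
  by (simp, rule filter_cong, auto)

lemma filter_before:
  "distinct L \<Longrightarrow> L = L1 @ a # L2 @ b # L3 \<Longrightarrow> Pr a \<Longrightarrow> Pr b \<Longrightarrow>
   (\<forall>c\<in>set L. Pr c \<longrightarrow> c = a \<or> c = b) \<Longrightarrow> filter Pr L = [a, b]"
proof -
  assume d: "distinct L" and L: "L = L1 @ a # L2 @ b # L3" and "Pr a" "Pr b"
    and c: "\<forall>c\<in>set L. Pr c \<longrightarrow> c = a \<or> c = b"
  have "filter Pr L1 = []" "filter Pr L2 = []" "filter Pr L3 = []"
    using d c L by (auto simp: filter_empty_conv)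
  then show ?thesis using L \<open>Pr a\<close> \<open>Pr b\<close> by simp
qed

lemma filter_single:
  assumes d: "distinct L" and aL: "a \<in> set L" and pa: "Pr a" and c: "\<forall>c\<in>set L. Pr c \<longrightarrow> c = a"
  shows "filter Pr L = [a]"
proof -
  obtain L1 L2 where L: "L = L1 @ a # L2" using split_list[OF aL] by blast
  have d2: "a \<notin> set L1" "a \<notin> set L2" using d unfolding L by auto
  have "\<forall>c\<in>set L1. \<not> Pr c" using c d2(1) unfolding L by auto
  moreover have "\<forall>c\<in>set L2. \<not> Pr c" using c d2(2) unfolding L by auto
  ultimately have "filter Pr L1 = []" "filter Pr L2 = []" by (simp_all add: filter_empty_conv)
  then show ?thesis using L pa by simp
qed

lemma before_split:
  assumes "L = L1 @ a # L2 @ b # L3" "c \<in> set L" "c \<noteq> a" "c \<noteq> b"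
  shows "(\<exists>M1 M2 M3. L = M1 @ c # M2 @ b # M3) \<or> (\<exists>M1 M2 M3. L = M1 @ a # M2 @ c # M3)"
proof -
  have "c \<in> set L1 \<or> c \<in> set L2 \<or> c \<in> set L3" using assms by auto
  then show ?thesis
  proof (elim disjE)
    assume "c \<in> set L1"
    then obtain A B where "L1 = A @ c # B" by (meson split_list)
    then have "L = A @ c # (B @ a # L2) @ b # L3" using assms by simp
    then show ?thesis by blast
  next
    assume "c \<in> set L2"
    then obtain A B where "L2 = A @ c # B" by (meson split_list)
    then have "L = (L1 @ a # A) @ c # B @ b # L3" using assms by simp
    then show ?thesis by blast
  next
    assume "c \<in> set L3"
    then obtain A B where "L3 = A @ c # B" by (meson split_list)
    then have "L = L1 @ a # (L2 @ b # A) @ c # B" using assms by simp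
    then show ?thesis by blast
  qed
qed

lemma sorted_from_before:
  "(\<And>L1 a L2 b L3. L = L1 @ a # L2 @ b # L3 \<Longrightarrow> R a b) \<Longrightarrow> sorted_wrt R L"
proof (induction L)
  case (Cons c L)
  have "\<forall>y\<in>set L. R c y"
  proof
    fix y assume "y \<in> set L"
    then obtain A B where "L = A @ y # B" by (meson split_list)
    then show "R c y" using Cons.prems[of "[]" c A y B] by simp
  qed
  moreover have "sorted_wrt R L"
    by (rule Cons.IH) (use Cons.prems in \<open>metis append_Cons\<close>)
  ultimately show ?case by simp
qed simp

lemma x_decomp:
  assumes "filter (\<lambda>c. c = x) u = [x, x]"
  shows "\<exists>P M Q. u = P @ x # M @ x # Q \<and> x \<notin> set P \<and> x \<notin> set M \<and> x \<notin> set Q"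
proof -
  have "x \<in> set (filter (\<lambda>c. c = x) u)" using assms by simp
  then have "x \<in> set u" by simp
  then obtain P R where u: "u = P @ x # R" "x \<notin> set P" by (meson split_list_first)
  have "filter (\<lambda>c. c = x) P = []" using u(2) by (auto simp: filter_empty_conv)
  then have fR: "filter (\<lambda>c. c = x) R = [x]" using assms u(1) by simp
  then have "x \<in> set (filter (\<lambda>c. c = x) R)" by simp
  then have "x \<in> set R" by simp
  then obtain M Q where R: "R = M @ x # Q" "x \<notin> set M" by (meson split_list_first)
  have "filter (\<lambda>c. c = x) M = []" using R(2) by (auto simp: filter_empty_conv)
  then have "filter (\<lambda>c. c = x) Q = []" using fR R(1) by simp
  then have "x \<notin> set Q" by (auto simp: filter_empty_conv)
  then show ?thesis using u R by blast
qed

lemma concat_pairs: "concat (map (\<lambda>i. [2*i, 2*i+1]) [1..<m]) = [2..<2*m]"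
proof (induction m)
  case (Suc m)
  then show ?case by (cases m) auto
qed simp




lemma filter_map_concat: "filter Pr (map f xs) = concat (map (\<lambda>i. filter Pr [f i]) xs)"
  by (induction xs) auto

locale ctx =
  fixes S :: "'a::monoid_mult itself" and n x' :: nat and z t' :: "nat \<Rightarrow> nat"
    and P0 Q0 w :: word and I :: "nat set" and ns :: "nat list"
  assumes KB: "\<And>a b c v. distinct [a,b,c] \<Longrightarrow> satisfies S [a,b,c,c,a] v \<Longrightarrow> v = [a,b,c,c,a]"
    and n1: "n \<ge> 1"
    and dist: "distinct (x' # map z ns @ map t' ns)"
    and P0: "P0 = concat (map (\<lambda>i. [z i, t' i]) ns)"
    and Q0: "Q0 = map z ns"
    and w_def: "w = P0 @ [x',x'] @ Q0"
    and I_def: "I = {1..<n+1}"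
    and ns_def: "ns = [1..<n+1]"
begin

lemma setI: "set ns = I" by (simp only: ns_def set_upt I_def)
lemma srt: "sorted ns" "distinct ns" by (simp_all only: ns_def sorted_upt distinct_upt)
lemma I1: "1 \<in> I" using n1 by (simp add: I_def)
lemma KBr: "distinct [a,b,c] \<Longrightarrow> satisfies S v [a,b,c,c,a] \<Longrightarrow> v = [a,b,c,c,a]"
  using KB sat_sym by blast
lemma dz: "inj_on z I" and dt: "inj_on t' I"
  using dist by (simp_all add: setI distinct_map)
lemma zz[simp]: "i \<in> I \<Longrightarrow> j \<in> I \<Longrightarrow> z i = z j \<longleftrightarrow> i = j" using dz by (auto dest: inj_onD)
lemma tt[simp]: "i \<in> I \<Longrightarrow> j \<in> I \<Longrightarrow> t' i = t' j \<longleftrightarrow> i = j" using dt by (auto dest: inj_onD)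
lemma disj: "z ` I \<inter> t' ` I = {}" "x' \<notin> z ` I" "x' \<notin> t' ` I"
  using dist by (simp_all add: setI)
lemma zt[simp]: "i \<in> I \<Longrightarrow> j \<in> I \<Longrightarrow> z i \<noteq> t' j" using disj(1) by blast
lemma tz[simp]: "i \<in> I \<Longrightarrow> j \<in> I \<Longrightarrow> t' j \<noteq> z i" using disj(1) by blast
lemma zx[simp]: "i \<in> I \<Longrightarrow> z i \<noteq> x'" using disj(2) by blast
lemma xz[simp]: "i \<in> I \<Longrightarrow> x' \<noteq> z i" using disj(2) by blast
lemma tx[simp]: "i \<in> I \<Longrightarrow> t' i \<noteq> x'" using disj(3) by blast
lemma xt[simp]: "i \<in> I \<Longrightarrow> x' \<noteq> t' i" using disj(3) by blast

lemma setP0: "set P0 = z ` I \<union> t' ` I" by (auto simp: P0 setI)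
lemma setQ0: "set Q0 = z ` I" by (simp add: Q0 setI)
lemma setw: "set w = insert x' (z ` I \<union> t' ` I)"
  by (auto simp: w_def setP0 setQ0)

lemma fP0: "filter Pr P0 = concat (map (\<lambda>i. filter Pr [z i, t' i]) ns)"
  by (simp add: P0 filter_concat comp_def)
lemma fQ0: "filter Pr Q0 = concat (map (\<lambda>i. filter Pr [z i]) ns)"
  by (simp add: Q0 filter_map_concat)

end


context ctx begin

lemma F1: "filter (\<lambda>c. c = z i \<or> c = t' j \<or> c = x') w = [z i, t' j, x', x', z i]"
    if i: "i \<in> I" and j: "j \<in> I" and ij: "i \<le> j" for i j
  proof -
    let ?K = "\<lambda>c. c = z i \<or> c = t' j \<or> c = x'"
    have a: "filter ?K P0 = [z i, t' j]"
    proof (cases "i = j")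
      case True
      have "filter ?K P0 = filter ?K [z i, t' i]"
        unfolding fP0 by (rule concat_map_single) (use i True in \<open>auto simp: setI srt\<close>)
      then show ?thesis using i True by simp
    next
      case False
      then have "i < j" using ij by simp
      have "filter ?K P0 = filter ?K [z i, t' i] @ filter ?K [z j, t' j]"
        unfolding fP0 by (rule concat_map_two) (use i j \<open>i < j\<close> in \<open>auto simp: setI srt\<close>)
      then show ?thesis using i j False by simp
    qed
    have b: "filter ?K Q0 = [z i]"
    proof -
      have "filter ?K Q0 = filter ?K [z i]"
        unfolding fQ0 by (rule concat_map_single) (use i j in \<open>auto simp: setI srt\<close>)
      then show ?thesis using i j by simp
    qed
    show ?thesis using a b by (simp add: w_def)
  qed
lemma F2: "filter (\<lambda>c. c = z p \<or> c = t' q \<or> c = x') w = [t' q, z p, x', x', z p]"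
    if p: "p \<in> I" and q: "q \<in> I" and qp: "q < p" for p q
  proof -
    let ?K = "\<lambda>c. c = z p \<or> c = t' q \<or> c = x'"
    have "filter ?K P0 = filter ?K [z q, t' q] @ filter ?K [z p, t' p]"
      unfolding fP0 by (rule concat_map_two) (use p q qp in \<open>auto simp: setI srt\<close>)
    then have a: "filter ?K P0 = [t' q, z p]" using p q qp by simp
    have "filter ?K Q0 = filter ?K [z p]"
      unfolding fQ0 by (rule concat_map_single) (use p q in \<open>auto simp: setI srt\<close>)
    then have b: "filter ?K Q0 = [z p]" using p q by simp
    show ?thesis using a b p q by (simp add: w_def)
  qed
lemma F3a: "filter (\<lambda>c. c = z q \<or> c = t' q \<or> c = z p) P0 = [z q, t' q, z p]"
    if p: "p \<in> I" and q: "q \<in> I" and qp: "q < p" for p q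
  proof -
    let ?K = "\<lambda>c. c = z q \<or> c = t' q \<or> c = z p"
    have "filter ?K P0 = filter ?K [z q, t' q] @ filter ?K [z p, t' p]"
      unfolding fP0 by (rule concat_map_two) (use p q qp in \<open>auto simp: setI srt\<close>)
    then show ?thesis using p q qp by simp
  qed
lemma F3: "filter (\<lambda>c. c = z q \<or> c = t' q \<or> c = z p) w = [z q, t' q, z p, z q, z p]"
    if p: "p \<in> I" and q: "q \<in> I" and qp: "q < p" for p q
  proof -
    let ?K = "\<lambda>c. c = z q \<or> c = t' q \<or> c = z p"
    have "filter ?K Q0 = filter ?K [z q] @ filter ?K [z p]"
      unfolding fQ0 by (rule concat_map_two) (use p q qp in \<open>auto simp: setI srt\<close>)
    then have b: "filter ?K Q0 = [z q, z p]" using p q qp by simp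
    show ?thesis using b F3a[OF p q qp] p q by (simp add: w_def)
  qed


end



locale ctx2 = ctx +
  fixes w' :: word
  assumes sat: "satisfies S w w'"
begin

lemma Kij: "filter (\<lambda>c. c = z i \<or> c = t' j \<or> c = x') w' = [z i, t' j, x', x', z i]"
    if i: "i \<in> I" and j: "j \<in> I" and ij: "i \<le> j" for i j
  proof -
    have "satisfies S [z i, t' j, x', x', z i] (filter (\<lambda>c. c = z i \<or> c = t' j \<or> c = x') w')"
      using sat_filter[OF sat] F1[OF i j ij] by metis
    then show ?thesis by (rule KB[rotated]) (use i j in simp)
  qed
lemma letters: "set w' \<subseteq> set w"
  proof
    fix v assume v: "v \<in> set w'"
    show "v \<in> set w"
    proof (rule ccontr)
      assume nv: "v \<notin> set w"
      let ?Pr = "\<lambda>c. c = z 1 \<or> c = t' 1 \<or> c = x' \<or> c \<notin> set w"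
      have "filter ?Pr w = filter (\<lambda>c. c = z 1 \<or> c = t' 1 \<or> c = x') w"
        by (rule filter_cong) auto
      also have "\<dots> = [z 1, t' 1, x', x', z 1]" using F1[OF I1 I1] by simp
      finally have "satisfies S [z 1, t' 1, x', x', z 1] (filter ?Pr w')"
        using sat_filter[OF sat] by metis
      then have "filter ?Pr w' = [z 1, t' 1, x', x', z 1]" by (rule KB[rotated]) (use I1 in simp)
      moreover have "v \<in> set (filter ?Pr w')" using v nv by simp
      ultimately have "v \<in> {z 1, t' 1, x'}" by auto
      moreover have "z 1 \<in> set w" "t' 1 \<in> set w" "x' \<in> set w" using I1 by (simp_all add: setw)
      ultimately show False using nv by blast
    qed
  qed
lemma xx: "filter (\<lambda>c. c = x') w' = [x', x']"
  proof -
    have "filter (\<lambda>c. c = x') (filter (\<lambda>c. c = z 1 \<or> c = t' 1 \<or> c = x') w') = [x', x']"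
      using Kij[OF I1 I1 order_refl] I1 by simp
    then show ?thesis by (simp only: filter_sub[of "\<lambda>c. c = z 1 \<or> c = t' 1 \<or> c = x'" x'] simp_thms)
  qed

end

locale ctx3 = ctx2 +
  fixes P M Q :: word
  assumes w'd: "w' = P @ x' # M @ x' # Q" and xP: "x' \<notin> set P"
    and xM: "x' \<notin> set M" and xQ: "x' \<notin> set Q"
begin

lemma parts: "filter (\<lambda>c. c = z i \<or> c = t' i \<or> c = x') P = [z i, t' i] \<and>
               filter (\<lambda>c. c = z i \<or> c = t' i \<or> c = x') M = [] \<and>
               filter (\<lambda>c. c = z i \<or> c = t' i \<or> c = x') Q = [z i]" if i: "i \<in> I" for i
  proof -
    let ?K = "\<lambda>c. c = z i \<or> c = t' i \<or> c = x'"
    have "filter ?K P @ x' # filter ?K M @ x' # filter ?K Q = [z i, t' i, x', x', z i]"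
      using Kij[OF i i order_refl] w'd by simp
    then show ?thesis
      by (rule decomp_lem) (use xP xM xQ i in auto)
  qed
lemma w'set: "c \<in> set w' \<Longrightarrow> c \<noteq> x' \<Longrightarrow> (\<exists>i\<in>I. c = z i \<or> c = t' i)" for c
    using letters setw by auto
lemma Mnil: "M = []"
  proof (rule ccontr)
    assume "M \<noteq> []"
    then obtain m where m: "m \<in> set M" by (cases M) auto
    then have "m \<noteq> x'" using xM by auto
    then obtain i where i: "i \<in> I" "m = z i \<or> m = t' i" using w'set m w'd by auto
    then have "m \<in> set (filter (\<lambda>c. c = z i \<or> c = t' i \<or> c = x') M)" using m by auto
    then show False using parts[OF i(1)] by simp
  qed
lemma setQ: "set Q = z ` I"
  proof
    show "set Q \<subseteq> z ` I"
    proof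
      fix q assume q: "q \<in> set Q"
      then have "q \<noteq> x'" using xQ by auto
      then obtain i where i: "i \<in> I" "q = z i \<or> q = t' i" using w'set q w'd by auto
      show "q \<in> z ` I"
      proof (cases "q = z i")
        case True then show ?thesis using i by auto
      next
        case False
        then have "q \<in> set (filter (\<lambda>c. c = z i \<or> c = t' i \<or> c = x') Q)" using q i by auto
        then show ?thesis using parts[OF i(1)] False by simp
      qed
    qed
  next
    show "z ` I \<subseteq> set Q"
    proof
      fix q assume "q \<in> z ` I"
      then obtain i where i: "i \<in> I" "q = z i" by auto
      have "z i \<in> set (filter (\<lambda>c. c = z i \<or> c = t' i \<or> c = x') Q)" using parts[OF i(1)] by simp
      then show "q \<in> set Q" using i by simp
    qed
  qed
lemma setP: "set P = z ` I \<union> t' ` I"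
  proof
    show "set P \<subseteq> z ` I \<union> t' ` I"
    proof
      fix q assume q: "q \<in> set P"
      then have "q \<noteq> x'" using xP by auto
      then obtain i where i: "i \<in> I" "q = z i \<or> q = t' i" using w'set q w'd by auto
      then show "q \<in> z ` I \<union> t' ` I" by auto
    qed
  next
    show "z ` I \<union> t' ` I \<subseteq> set P"
    proof
      fix q assume "q \<in> z ` I \<union> t' ` I"
      then obtain i where i: "i \<in> I" "q = z i \<or> q = t' i" by auto
      have "set (filter (\<lambda>c. c = z i \<or> c = t' i \<or> c = x') P) = {z i, t' i}" using parts[OF i(1)] by simp
      then show "q \<in> set P" using i by auto
    qed
  qed
lemma dQ: "distinct Q"
  proof (rule distinct_from_filter, rule ballI)
    fix a assume "a \<in> set Q"
    then obtain i where i: "i \<in> I" "a = z i" using setQ by auto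
    have "filter (\<lambda>c. c = a) Q = filter (\<lambda>c. c = a) (filter (\<lambda>c. c = z i \<or> c = t' i \<or> c = x') Q)"
      by (rule filter_sub[symmetric]) (use i in simp)
    also have "\<dots> = [a]" using parts[OF i(1)] i by simp
    finally show "filter (\<lambda>c. c = a) Q = [a]" .
  qed
lemma dP: "distinct P"
  proof (rule distinct_from_filter, rule ballI)
    fix a assume "a \<in> set P"
    then obtain i where i: "i \<in> I" "a = z i \<or> a = t' i" using setP by auto
    have "filter (\<lambda>c. c = a) P = filter (\<lambda>c. c = a) (filter (\<lambda>c. c = z i \<or> c = t' i \<or> c = x') P)"
      by (rule filter_sub[symmetric]) (use i in auto)
    also have "\<dots> = [a]" using parts[OF i(1)] i by auto
    finally show "filter (\<lambda>c. c = a) P = [a]" .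
  qed
lemma w'e: "w' = P @ [x', x'] @ Q" using w'd Mnil by simp

lemma noI: False if p: "p \<in> I" and q: "q \<in> I" and qp: "q \<le> p" and L: "P = L1 @ t' p # L2 @ z q # L3"
    for p q L1 L2 L3
  proof -
    let ?K = "\<lambda>c. c = z q \<or> c = t' p \<or> c = x'"
    have a: "filter ?K P = [t' p, z q]"
      by (rule filter_before[OF dP L]) (use xP in auto)
    have b: "filter ?K Q = [z q]"
      by (rule filter_single[OF dQ]) (use xQ setQ p q in auto)
    have "filter ?K w' = [z q, t' p, x', x', z q]" using Kij[OF q p qp] .
    then show False using a b w'e p q by simp
  qed
lemma noII: False if p: "p \<in> I" and q: "q \<in> I" and qp: "q < p" and L: "P = L1 @ z p # L2 @ t' q # L3"
    for p q L1 L2 L3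
  proof -
    let ?K = "\<lambda>c. c = z p \<or> c = t' q \<or> c = x'"
    have a: "filter ?K P = [z p, t' q]"
      by (rule filter_before[OF dP L]) (use xP in auto)
    have b: "filter ?K Q = [z p]"
      by (rule filter_single[OF dQ]) (use xQ setQ p q in auto)
    have "filter ?K w' = [z p, t' q, x', x', z p]" using a b w'e by simp
    then have "satisfies S (filter ?K w) [z p, t' q, x', x', z p]" using sat_filter[OF sat] by metis
    then have "filter ?K w = [z p, t' q, x', x', z p]" by (rule KBr[rotated]) (use p q in simp)
    then show False using F2[OF p q qp] p q by simp
  qed

definition r where "r = (\<lambda>v. if v \<in> z ` I then 2 * the_inv_into I z v else 2 * the_inv_into I t' v + 1)"
lemma rz: "r (z i) = 2 * i" if "i \<in> I" for i
    using that by (simp add: r_def the_inv_into_f_f[OF dz])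
lemma rt: "r (t' i) = 2 * i + 1" if "i \<in> I" for i
  proof -
    have "t' i \<notin> z ` I" using that by auto
    then show ?thesis using that by (simp add: r_def the_inv_into_f_f[OF dt])
  qed
lemma rinj: "inj_on r (z ` I \<union> t' ` I)"
  proof (rule inj_onI)
    fix u v assume u: "u \<in> z ` I \<union> t' ` I" and v: "v \<in> z ` I \<union> t' ` I" and e: "r u = r v"
    from u obtain i where i: "i \<in> I" "u = z i \<or> u = t' i" by auto
    from v obtain j where j: "j \<in> I" "v = z j \<or> v = t' j" by auto
    from i j e show "u = v" by (auto simp: rz rt) presburger+
  qed

lemma sP: "sorted_wrt (\<lambda>a b. r a < r b) P"
  proof (rule sorted_from_before)
    fix L1 a L2 b L3 assume L: "P = L1 @ a # L2 @ b # L3"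
    have ab: "a \<noteq> b" using dP L by auto
    have "a \<in> set P" "b \<in> set P" using L by auto
    then obtain p q where p: "p \<in> I" "a = z p \<or> a = t' p" and q: "q \<in> I" "b = z q \<or> b = t' q"
      using setP by blast
    show "r a < r b"
    proof (rule ccontr)
      assume nlt: "\<not> r a < r b"
      show False
        using p(2)
      proof (elim disjE)
        assume a: "a = z p"
        show False using q(2)
        proof (elim disjE)
          assume b: "b = z q"
          then have "q < p" using a ab nlt p q by (auto simp: rz)
          have "t' q \<in> set P" using setP q by auto
          then have "(\<exists>M1 M2 M3. P = M1 @ t' q # M2 @ z q # M3) \<or> (\<exists>M1 M2 M3. P = M1 @ z p # M2 @ t' q # M3)"
            using before_split[OF L[unfolded a b]] p q by auto
          then show False using noI[OF q(1) q(1) order_refl] noII[OF p(1) q(1) \<open>q < p\<close>] by blast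
        next
          assume b: "b = t' q"
          then have "q < p" using a nlt p q by (auto simp: rz rt)
          then show False using noII[OF p(1) q(1)] L a b by blast
        qed
      next
        assume a: "a = t' p"
        show False using q(2)
        proof (elim disjE)
          assume b: "b = z q"
          then have "q \<le> p" using a nlt p q by (auto simp: rz rt)
          then show False using noI[OF p(1) q(1)] L a b by blast
        next
          assume b: "b = t' q"
          then have "q < p" using a ab nlt p q by (auto simp: rt)
          have "z p \<in> set P" using setP p by auto
          then have "(\<exists>M1 M2 M3. P = M1 @ z p # M2 @ t' q # M3) \<or> (\<exists>M1 M2 M3. P = M1 @ t' p # M2 @ z p # M3)"
            using before_split[OF L[unfolded a b]] p q by auto
          then show False using noI[OF p(1) p(1) order_refl] noII[OF p(1) q(1) \<open>q < p\<close>] by blast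
        qed
      qed
    qed
  qed
lemma setP0': "set P0 = z ` I \<union> t' ` I" by (auto simp: P0 setI)
lemma mapP0: "map r P0 = [2..<2*(n+1)]"
  proof -
    have "map r P0 = concat (map (\<lambda>i. [r (z i), r (t' i)]) ns)"
      by (simp add: P0 map_concat comp_def)
    also have "\<dots> = concat (map (\<lambda>i. [2*i, 2*i+1]) ns)"
      by (rule arg_cong[where f=concat], rule map_cong) (auto simp: rz rt setI)
    also have "\<dots> = [2..<2*(n+1)]" unfolding ns_def by (rule concat_pairs)
    finally show ?thesis .
  qed
lemma PP0: "P = P0"
  proof (rule map_sorted_distinct_set_unique[of r])
    show "inj_on r (set P \<union> set P0)" using rinj setP setP0' by simp
    have "sorted_wrt (<) (map r P)" using sP by (simp add: sorted_wrt_map)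
    then show "sorted (map r P)" "distinct (map r P)" by (simp_all add: strict_sorted_iff)
    show "sorted (map r P0)" "distinct (map r P0)" by (simp_all only: mapP0 sorted_upt distinct_upt)
    show "set P = set P0" using setP setP0' by simp
  qed

lemma sQ: "sorted_wrt (\<lambda>a b. r a < r b) Q"
  proof (rule sorted_from_before)
    fix L1 a L2 b L3 assume L: "Q = L1 @ a # L2 @ b # L3"
    have ab: "a \<noteq> b" using dQ L by auto
    have "a \<in> set Q" "b \<in> set Q" using L by auto
    then obtain p q where p: "p \<in> I" "a = z p" and q: "q \<in> I" "b = z q"
      using setQ by blast
    show "r a < r b"
    proof (rule ccontr)
      assume nlt: "\<not> r a < r b"
      then have qp: "q < p" using ab p q by (auto simp: rz)
      let ?K = "\<lambda>c. c = z q \<or> c = t' q \<or> c = z p"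
      have a: "filter ?K P = [z q, t' q, z p]" using F3a[OF p(1) q(1) qp] PP0 by simp
      have b: "filter ?K Q = [z p, z q]"
        by (rule filter_before[OF dQ L[unfolded p(2) q(2)]]) (use setQ p q in auto)
      have "filter ?K w' = [z q, t' q, z p, z p, z q]" using a b w'e p q by simp
      then have "satisfies S (filter ?K w) [z q, t' q, z p, z p, z q]" using sat_filter[OF sat] by metis
      then have "filter ?K w = [z q, t' q, z p, z p, z q]" by (rule KBr[rotated]) (use p q qp in simp)
      then show False using F3[OF p(1) q(1) qp] p q qp by simp
    qed
  qed
lemma QQ0: "Q = Q0"
  proof (rule map_sorted_distinct_set_unique[of r])
    show "inj_on r (set Q \<union> set Q0)" using rinj setQ by (auto simp: Q0 setI intro: inj_on_subset)
    have "sorted_wrt (<) (map r Q)" using sQ by (simp add: sorted_wrt_map)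
    then show "sorted (map r Q)" "distinct (map r Q)" by (simp_all add: strict_sorted_iff)
    have "map r Q0 = map (\<lambda>i. 2 * i) ns" by (auto simp: Q0 rz setI)
    moreover have "sorted_wrt (<) (map (\<lambda>i. 2 * i) ns)"
      unfolding sorted_wrt_map ns_def by (rule sorted_wrt_mono_rel[OF _ sorted_wrt_upt]) simp
    ultimately have "sorted_wrt (<) (map r Q0)" by simp
    then show "sorted (map r Q0)" "distinct (map r Q0)" by (simp_all add: strict_sorted_iff)
    show "set Q = set Q0" using setQ by (simp add: Q0 setI)
  qed

end



theorem lemma3p7:
  fixes S :: "'a::monoid_mult itself"
    and x y t :: nat
  assumes "distinct [x, y, t]"
    and "isoterm S [y, x, x, t, y]"
    and "isoterm S [y, t, x, x, y]"
  shows "\<forall>(n::nat) (x' :: nat) (z :: nat \<Rightarrow> nat) (t' :: nat \<Rightarrow> nat).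
           n \<ge> 1 \<and> distinct (x' # map z [1..<n+1] @ map t' [1..<n+1]) \<longrightarrow>
           isoterm S (concat (map (\<lambda>i. [z i, t' i]) [1..<n+1]) @ [x', x'] @ map z [1..<n+1])"
proof (intro allI impI)
  fix n x' :: nat and z t' :: "nat \<Rightarrow> nat"
  assume h: "n \<ge> 1 \<and> distinct (x' # map z [1..<n+1] @ map t' [1..<n+1])"
  have KB': "\<And>a b c v. distinct [a,b,c] \<Longrightarrow> satisfies S [a,b,c,c,a] v \<Longrightarrow> v = [a,b,c,c,a]"
    using KB[OF assms(3) assms(1)] by blast
  interpret c: ctx S n x' z t' "concat (map (\<lambda>i. [z i, t' i]) [1..<n+1])" "map z [1..<n+1]"
    "concat (map (\<lambda>i. [z i, t' i]) [1..<n+1]) @ [x', x'] @ map z [1..<n+1]" "{1..<n+1}" "[1..<n+1]"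
    by unfold_locales (use h KB' in blast)+
  show "isoterm S (concat (map (\<lambda>i. [z i, t' i]) [1..<n+1]) @ [x', x'] @ map z [1..<n+1])"
    unfolding isoterm_def
  proof (intro allI impI)
    fix w' assume hw: "is_word w' \<and> satisfies S (concat (map (\<lambda>i. [z i, t' i]) [1..<n+1]) @ [x', x'] @ map z [1..<n+1]) w'"
    interpret c2: ctx2 S n x' z t' "concat (map (\<lambda>i. [z i, t' i]) [1..<n+1])" "map z [1..<n+1]"
      "concat (map (\<lambda>i. [z i, t' i]) [1..<n+1]) @ [x', x'] @ map z [1..<n+1]" "{1..<n+1}" "[1..<n+1]" w'
      by unfold_locales (use hw in blast)+
    obtain P M Q where d: "w' = P @ x' # M @ x' # Q" "x' \<notin> set P" "x' \<notin> set M" "x' \<notin> set Q"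
      using x_decomp[OF c2.xx] by blast
    interpret c3: ctx3 S n x' z t' "concat (map (\<lambda>i. [z i, t' i]) [1..<n+1])" "map z [1..<n+1]"
      "concat (map (\<lambda>i. [z i, t' i]) [1..<n+1]) @ [x', x'] @ map z [1..<n+1]" "{1..<n+1}" "[1..<n+1]" w' P M Q
      by unfold_locales (use d in blast)+
    show "w' = concat (map (\<lambda>i. [z i, t' i]) [1..<n+1]) @ [x', x'] @ map z [1..<n+1]"
      using c3.w'e c3.PP0 c3.QQ0 by simp
  qed
qed


end
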